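(* During every execution of the algorithm, at least one active candidate exists.
   Context: A broadcast network is modeled as a connected graph G(V,E) with n nodes. In the fragment-level leader election algorithm, nodes are partitioned into fragments, each consisting of an active candidate and its supporting nodes; id(F) = (size, candidate identity) ordered lexicographically (by size, then by identity); external edges are directed from the larger-id to the smaller-id fragment. Initially each node is an active candidate of a size-1 fragment in state wait. A fragment with an outgoing edge is in wait; one whose external edges are all incoming enters work, counts its size new_size, and compares with its maximal neighbor F': if new_size > X · size(F') (X > 1) it remains active, updates its size, makes all external edges outgoing and returns to wait; otherwise its candidate becomes inactive and the fragment joins F'. A fragment with no external edges is in state leader. A candidate is active while its fragment is in state work, wait or leader. *)

theory Defs
  imports Complex_Main
begin

(* States of a candidate (the candidate of a fragment carries its fragment's state). *)
datatype cstate = Wait | Work | Leader | Inactive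

(* Global configuration:
   cand v : the candidate of the fragment containing node v
   sz c   : the size recorded by candidate c (size(F) in id(F))
   st c   : the state of candidate c *)
record 'v conf =
  cand :: "'v \<Rightarrow> 'v"
  sz   :: "'v \<Rightarrow> nat"
  st   :: "'v \<Rightarrow> cstate"

definition connected_graph :: "'v set \<Rightarrow> ('v \<times> 'v) set \<Rightarrow> bool" where
  "connected_graph V E \<longleftrightarrow> (\<forall>u\<in>V. \<forall>w\<in>V. (u, w) \<in> E\<^sup>*)"

definition frag :: "'v set \<Rightarrow> ('v, 'b) conf_scheme \<Rightarrow> 'v \<Rightarrow> 'v set" where
  "frag V s c = {v \<in> V. cand s v = c}"

(* id(F) = (size, candidate identity), compared lexicographically *)
definition fid_less :: "('v::linorder, 'b) conf_scheme \<Rightarrow> 'v \<Rightarrow> 'v \<Rightarrow> bool" where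
  "fid_less s c d \<longleftrightarrow> sz s c < sz s d \<or> (sz s c = sz s d \<and> c < d)"

definition nbrs :: "('v \<times> 'v) set \<Rightarrow> ('v, 'b) conf_scheme \<Rightarrow> 'v \<Rightarrow> 'v set" where
  "nbrs E s c = {cand s w | u w. (u, w) \<in> E \<and> cand s u = c \<and> cand s w \<noteq> c}"

definition init_conf :: "'v set \<Rightarrow> 'v conf \<Rightarrow> bool" where
  "init_conf V s \<longleftrightarrow> (\<forall>v\<in>V. cand s v = v \<and> sz s v = 1 \<and> st s v = Wait)"

definition active :: "'v set \<Rightarrow> 'v conf \<Rightarrow> 'v \<Rightarrow> bool" where
  "active V s c \<longleftrightarrow> c \<in> V \<and> cand s c = c \<and> st s c \<in> {Work, Wait, Leader}"

(* External edges point from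
   the larger-id fragment to the smaller-id one, so a fragment has all external
   edges incoming iff all its neighbouring fragments have larger id. *)
inductive step :: "real \<Rightarrow> 'v set \<Rightarrow> ('v \<times> 'v) set \<Rightarrow> ('v::linorder) conf \<Rightarrow> 'v conf \<Rightarrow> bool"
  for X V E where
  to_work:
    "\<lbrakk> c \<in> V; cand s c = c; st s c = Wait; nbrs E s c \<noteq> {};
       \<forall>d\<in>nbrs E s c. fid_less s c d \<rbrakk>
     \<Longrightarrow> step X V E s (s\<lparr>st := (st s)(c := Work)\<rparr>)"
| work_stay:
    "\<lbrakk> c \<in> V; cand s c = c; st s c = Work; d \<in> nbrs E s c;
       \<forall>d'\<in>nbrs E s c. \<not> fid_less s d d';
       real (card (frag V s c)) > X * real (sz s d) \<rbrakk>
     \<Longrightarrow> step X V E s (s\<lparr>sz := (sz s)(c := card (frag V s c)), st := (st s)(c := Wait)\<rparr>)"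
| work_join:
    "\<lbrakk> c \<in> V; cand s c = c; st s c = Work; d \<in> nbrs E s c;
       \<forall>d'\<in>nbrs E s c. \<not> fid_less s d d';
       \<not> (real (card (frag V s c)) > X * real (sz s d)) \<rbrakk>
     \<Longrightarrow> step X V E s (s\<lparr>cand := (\<lambda>v. if cand s v = c then d else cand s v),
                           st := (st s)(c := Inactive)\<rparr>)"
| to_leader:
    "\<lbrakk> c \<in> V; cand s c = c; st s c \<in> {Wait, Work}; nbrs E s c = {} \<rbrakk>
     \<Longrightarrow> step X V E s (s\<lparr>st := (st s)(c := Leader)\<rparr>)"

end

theory Submission
  imports Defs
begin

definition inv_ok :: "'v set \<Rightarrow> 'v conf \<Rightarrow> bool" where
  "inv_ok V s \<longleftrightarrow> (\<forall>v\<in>V. cand s v \<in> V \<and> cand s (cand s v) = cand s v \<and> st s (cand s v) \<noteq> Inactive)"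

lemma inv_step:
  assumes "step X V E s t" "inv_ok V s" "E \<subseteq> V \<times> V"
  shows "inv_ok V t"
  using assms(1)
proof cases
  case (to_work c)
  then show ?thesis using assms(2) unfolding inv_ok_def by auto
next
  case (work_stay c d)
  then show ?thesis using assms(2) unfolding inv_ok_def by auto
next
  case (work_join c d)
  from \<open>d \<in> nbrs E s c\<close> obtain u w where uw: "(u, w) \<in> E" "cand s u = c" "cand s w \<noteq> c" "d = cand s w"
    unfolding nbrs_def by blast
  have wV: "w \<in> V" using uw(1) assms(3) by auto
  have d: "d \<in> V" "cand s d = d" "st s d \<noteq> Inactive" "d \<noteq> c"
    using assms(2) wV uw unfolding inv_ok_def by auto
  show ?thesis using work_join assms(2) d unfolding inv_ok_def by auto
next
  case (to_leader c)
  then show ?thesis using assms(2) unfolding inv_ok_def by auto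
qed

theorem lemma1:
  fixes V :: "('v::linorder) set" and E :: "('v \<times> 'v) set" and X :: real
    and s0 s :: "'v conf"
  assumes "finite V" and "V \<noteq> {}" and "E \<subseteq> V \<times> V" and "sym E"
    and "connected_graph V E" and "X > 1"
    and "init_conf V s0"
    and "(step X V E)\<^sup>*\<^sup>* s0 s"
  shows "\<exists>c. active V s c"
proof -
  have "inv_ok V s0" using assms(7) unfolding inv_ok_def init_conf_def by auto
  have "inv_ok V s" using assms(8) \<open>inv_ok V s0\<close>
    by (induction rule: rtranclp_induct) (auto intro: inv_step[OF _ _ assms(3)])
  obtain v where "v \<in> V" using assms(2) by auto
  then have "active V s (cand s v)" using \<open>inv_ok V s\<close>
    unfolding inv_ok_def active_def by (cases "st s (cand s v)") auto
  then show ?thesis by blast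
qed

end
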